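(* Let $N$ be a set of $n$ elements and $v:2^N\to\mathbb{R}_+$ a function with $v(\emptyset)=0$. Consider the randomized procedure: pick a size $k\in\{1,\dots,n\}$ with probability $(k\cdot H_n)^{-1}$, where $H_n=\sum_{j=1}^n\frac1j$, and then pick a uniformly random set $S\subseteq N$ of size $k$. Then $$\mathbb{E}\Big[\sum_{i\in S}v(\{i\}\mid S\setminus\{i\})\Big]=\frac{1}{H_n}v(N).$$
   Context: Marginal value: $v(\{i\}\mid T)=v(T\cup\{i\})-v(T)$. *)

theory Defs
  imports "HOL-Analysis.Analysis"
begin

definition marginal :: "('a set \<Rightarrow> real) \<Rightarrow> 'a \<Rightarrow> 'a set \<Rightarrow> real" where
  "marginal v i T = v (T \<union> {i}) - v T"

definition expected_marginal_sum :: "'a set \<Rightarrow> ('a set \<Rightarrow> real) \<Rightarrow> real" where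
  "expected_marginal_sum N v =
     (let n = card N in
      \<Sum>k=1..n. (1 / (real k * (harm n :: real))) *
        (\<Sum>S\<in>{S. S \<subseteq> N \<and> card S = k}.
           (1 / real (n choose k)) * (\<Sum>i\<in>S. marginal v i (S - {i}))))"

end

theory Submission
  imports Defs
begin

definition Ak :: "'a set \<Rightarrow> ('a set \<Rightarrow> real) \<Rightarrow> nat \<Rightarrow> real" where
  "Ak N v k = (\<Sum>S\<in>{S. S \<subseteq> N \<and> card S = k}. v S)"

lemma double_count:
  assumes fin: "finite N" and k: "card N \<ge> Suc j"
  shows "(\<Sum>S\<in>{S. S \<subseteq> N \<and> card S = Suc j}. \<Sum>i\<in>S. g (S - {i}))
       = real (card N - j) * (\<Sum>T\<in>{T. T \<subseteq> N \<and> card T = j}. g T)"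
proof -
  let ?A = "{S. S \<subseteq> N \<and> card S = Suc j}"
  let ?B = "{T. T \<subseteq> N \<and> card T = j}"
  have finA: "finite ?A" using fin by (auto intro: finite_subset[of _ "Pow N"])
  have finB: "finite ?B" using fin by (auto intro: finite_subset[of _ "Pow N"])
  have "(\<Sum>S\<in>?A. \<Sum>i\<in>S. g (S - {i})) = (\<Sum>(S,i)\<in>Sigma ?A (\<lambda>S. S). g (S - {i}))"
    using finA fin by (subst sum.Sigma) (auto intro: finite_subset)
  also have "\<dots> = (\<Sum>(T,i)\<in>Sigma ?B (\<lambda>T. N - T). g T)"
  proof (rule sum.reindex_bij_witness[where i = "\<lambda>(T,i). (insert i T, i)" and j = "\<lambda>(S,i). (S - {i}, i)"])
    fix a assume "a \<in> Sigma ?B (\<lambda>T. N - T)"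
    then show "(\<lambda>(S,i). (S - {i}, i)) ((\<lambda>(T,i). (insert i T, i)) a) = a" by auto
  next
    fix a assume a: "a \<in> Sigma ?B (\<lambda>T. N - T)"
    then obtain T i where "a = (T,i)" "T \<subseteq> N" "card T = j" "i \<in> N" "i \<notin> T" by auto
    moreover have "finite T" using \<open>T \<subseteq> N\<close> fin finite_subset by blast
    ultimately show "(\<lambda>(T,i). (insert i T, i)) a \<in> Sigma ?A (\<lambda>S. S)" by auto
  next
    fix a assume "a \<in> Sigma ?A (\<lambda>S. S)"
    then show "(\<lambda>(T,i). (insert i T, i)) ((\<lambda>(S,i). (S - {i}, i)) a) = a" by auto
  next
    fix a assume a: "a \<in> Sigma ?A (\<lambda>S. S)"
    then obtain S i where "a = (S,i)" "S \<subseteq> N" "card S = Suc j" "i \<in> S" by auto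
    moreover have "finite S" using \<open>S \<subseteq> N\<close> fin finite_subset by blast
    ultimately show "(\<lambda>(S,i). (S - {i}, i)) a \<in> Sigma ?B (\<lambda>T. N - T)" by auto
  next
    fix a assume "a \<in> Sigma ?A (\<lambda>S. S)"
    then show "(case (\<lambda>(S,i). (S - {i}, i)) a of (T,i) \<Rightarrow> g T) = (case a of (S,i) \<Rightarrow> g (S - {i}))"
      by auto
  qed
  also have "\<dots> = (\<Sum>T\<in>?B. \<Sum>i\<in>N - T. g T)"
    using finB fin by (subst sum.Sigma) auto
  also have "\<dots> = (\<Sum>T\<in>?B. real (card N - j) * g T)"
    by (rule sum.cong) (auto simp: card_Diff_subset finite_subset[OF _ fin])
  finally show ?thesis by (simp add: sum_distrib_left)
qed

theorem mainTheorem16: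
  fixes N :: "'a set" and v :: "'a set \<Rightarrow> real"
  assumes "finite N" and "card N \<ge> 1"
    and "\<And>S. S \<subseteq> N \<Longrightarrow> v S \<ge> 0"
    and "v {} = 0"
  shows "expected_marginal_sum N v = v N / (harm (card N) :: real)"
proof -
  define n where "n = card N"
  define H :: real where "H = harm n"
  define a where "a = (\<lambda>k. Ak N v k / real (n choose k))"
  have trm: "(1 / (real (Suc j) * H)) *
        (\<Sum>S\<in>{S. S \<subseteq> N \<and> card S = Suc j}.
           (1 / real (n choose Suc j)) * (\<Sum>i\<in>S. marginal v i (S - {i})))
      = (a (Suc j) - a j) / H" if j: "j < n" for j
  proof -
    have m: "(\<Sum>i\<in>S. marginal v i (S - {i})) = real (Suc j) * v S - (\<Sum>i\<in>S. v (S - {i}))"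
      if "S \<in> {S. S \<subseteq> N \<and> card S = Suc j}" for S
    proof -
      have "(\<Sum>i\<in>S. marginal v i (S - {i})) = (\<Sum>i\<in>S. v S - v (S - {i}))"
        by (rule sum.cong) (auto simp: marginal_def insert_absorb)
      also have "\<dots> = real (Suc j) * v S - (\<Sum>i\<in>S. v (S - {i}))"
        using that by (simp add: sum_subtractf)
      finally show ?thesis .
    qed
    have "(\<Sum>S\<in>{S. S \<subseteq> N \<and> card S = Suc j}. (\<Sum>i\<in>S. marginal v i (S - {i})))
        = real (Suc j) * Ak N v (Suc j) - real (n - j) * Ak N v j"
      using double_count[OF assms(1), of j v] j m
      by (simp add: Ak_def sum_subtractf sum_distrib_left n_def)
    moreover have bin: "real (Suc j) * real (n choose Suc j) = real (n - j) * real (n choose j)"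
      using binomial_absorption[of j n] binomial_absorb_comp[of n j]
      by (metis of_nat_mult)
    moreover have "real (n choose Suc j) > 0" "real (n choose j) > 0" "H > 0"
      using j by (auto simp: H_def harm_pos_iff)
    ultimately show ?thesis
    proof -
      assume M: "(\<Sum>S\<in>{S. S \<subseteq> N \<and> card S = Suc j}. (\<Sum>i\<in>S. marginal v i (S - {i})))
        = real (Suc j) * Ak N v (Suc j) - real (n - j) * Ak N v j"
        and b: "real (Suc j) * real (n choose Suc j) = real (n - j) * real (n choose j)"
        and p: "real (n choose Suc j) > 0" "real (n choose j) > 0" "H > 0"
      define C1 where "C1 = real (n choose Suc j)"
      define C0 where "C0 = real (n choose j)"
      have "(1 / (real (Suc j) * H)) *
        (\<Sum>S\<in>{S. S \<subseteq> N \<and> card S = Suc j}.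
           (1 / real (n choose Suc j)) * (\<Sum>i\<in>S. marginal v i (S - {i})))
        = (real (Suc j) * Ak N v (Suc j) - real (n - j) * Ak N v j) / (real (Suc j) * C1 * H)"
        by (simp only: sum_distrib_left[symmetric] M C1_def) simp
      also have "\<dots> = Ak N v (Suc j) / (C1 * H) - real (n - j) * Ak N v j / (real (n - j) * C0 * H)"
      proof -
        have b': "real (Suc j) * C1 = real (n - j) * C0" using b unfolding C1_def C0_def .
        have "(real (Suc j) * Ak N v (Suc j) - real (n - j) * Ak N v j) / (real (Suc j) * C1 * H)
            = real (Suc j) * Ak N v (Suc j) / (real (Suc j) * C1 * H) - real (n - j) * Ak N v j / (real (Suc j) * C1 * H)"
          by (rule diff_divide_distrib)
        also have "real (Suc j) * Ak N v (Suc j) / (real (Suc j) * C1 * H) = Ak N v (Suc j) / (C1 * H)"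
          by (subst mult.assoc, rule mult_divide_mult_cancel_left) simp
        also have "real (n - j) * Ak N v j / (real (Suc j) * C1 * H) = real (n - j) * Ak N v j / (real (n - j) * C0 * H)" by (simp only: b')
        finally show ?thesis .
      qed
      also have "\<dots> = Ak N v (Suc j) / (C1 * H) - Ak N v j / (C0 * H)"
      proof -
        have "real (n - j) * Ak N v j / (real (n - j) * C0 * H) = Ak N v j / (C0 * H)"
          by (subst mult.assoc, rule mult_divide_mult_cancel_left) (use j in simp)
        then show ?thesis by (simp only:)
      qed
      also have "\<dots> = (a (Suc j) - a j) / H"
        unfolding a_def C1_def C0_def by (simp only: diff_divide_distrib divide_divide_eq_left)
      finally show ?thesis .
    qed
  qed
  have "expected_marginal_sum N v = (\<Sum>j<n. (a (Suc j) - a j) / H)"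
  proof -
    have "expected_marginal_sum N v = (\<Sum>k=1..n. (1 / (real k * H)) *
        (\<Sum>S\<in>{S. S \<subseteq> N \<and> card S = k}.
           (1 / real (n choose k)) * (\<Sum>i\<in>S. marginal v i (S - {i}))))"
      by (simp add: expected_marginal_sum_def n_def H_def Let_def)
    also have "\<dots> = (\<Sum>j<n. (1 / (real (Suc j) * H)) *
        (\<Sum>S\<in>{S. S \<subseteq> N \<and> card S = Suc j}.
           (1 / real (n choose Suc j)) * (\<Sum>i\<in>S. marginal v i (S - {i}))))"
    proof -
      have "{1..n} = Suc ` {..<n}" by (simp add: lessThan_atLeast0 image_Suc_atLeastLessThan atLeastLessThanSuc_atLeastAtMost)
      then show ?thesis by (simp add: sum.reindex)
    qed
    also have "\<dots> = (\<Sum>j<n. (a (Suc j) - a j) / H)"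
      by (rule sum.cong[OF refl], rule trm) simp
    finally show ?thesis .
  qed
  also have "\<dots> = (a n - a 0) / H"
    by (simp add: sum_divide_distrib[symmetric] lessThan_Suc_atMost sum_lessThan_telescope)
  also have "a n = v N"
  proof -
    have "{S. S \<subseteq> N \<and> card S = n} = {N}"
      using assms(1) card_subset_eq by (auto simp: n_def)
    then show ?thesis by (simp add: a_def Ak_def)
  qed
  also have "a 0 = 0"
  proof -
    have "{S. S \<subseteq> N \<and> card S = 0} = {{}}"
      using assms(1) by (auto dest: finite_subset)
    then show ?thesis by (simp add: a_def Ak_def assms(4))
  qed
  finally show ?thesis by (simp add: H_def n_def)
qed

end
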